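(* Let $F=\mathbb R(a,b)$ be the rational function field in two variables, $D=\left(\frac{a,b}{F}\right)$ the quaternion division algebra (generators $i,j$, $i^2=a$, $j^2=b$, $ij=-ji$) with the involution $\ast$ determined by $i^\ast=i$, $j^\ast=j$, and $K=F(i)$. Let $\lambda\colon D\to M_2(K)$ be the left regular representation with respect to the right $K$-basis $1,j$, and $X^\#=A^{-1}X^\ast A$ on $M_2(K)$ with $A=\mathrm{diag}(1,b)$ and $X^\ast$ the transpose with $\ast$ applied entrywise. Then there exist two distinct unital hermitian cones $M_1\ni j$ and $M_2\ni -j$ on $(D,\ast)$ with $M_1\cap K=M_2\cap K$; moreover no unital hermitian cone on $(M_2(K),\#)$ contains $\lambda(j)$ or $-\lambda(j)$, so for neither $k=1,2$ is there a unital hermitian cone $L$ on $(M_2(K),\#)$ with $M_k\subseteq\lambda^{-1}(L)$.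
   Context: A unital hermitian cone on a ring $R$ with involution $\ast$ is a subset $M\subseteq\{r:r^\ast=r\}$ with $1\in M$, $M+M\subseteq M$, $aMa^\ast\subseteq M$ for all $a\in R$, and $M\cap-M=\{0\}$. The left regular representation is defined by $de_\tau=\sum_\sigma e_\sigma\lambda(d)_{\sigma\tau}$ for $(e_1,e_2)=(1,j)$. *)

theory Defs
  imports "HOL-Analysis.Analysis" "HOL-Computational_Algebra.Fraction_Field"
    "HOL-Computational_Algebra.Polynomial"
begin

definition unital_hermitian_cone ::
  "'r set \<Rightarrow> ('r \<Rightarrow> 'r \<Rightarrow> 'r) \<Rightarrow> ('r \<Rightarrow> 'r \<Rightarrow> 'r) \<Rightarrow> ('r \<Rightarrow> 'r) \<Rightarrow>
   'r \<Rightarrow> 'r \<Rightarrow> ('r \<Rightarrow> 'r) \<Rightarrow> 'r set \<Rightarrow> bool" where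
  "unital_hermitian_cone R add mul star one zero neg M \<longleftrightarrow>
     M \<subseteq> {r \<in> R. star r = r} \<and>
     one \<in> M \<and>
     (\<forall>x\<in>M. \<forall>y\<in>M. add x y \<in> M) \<and>
     (\<forall>a\<in>R. \<forall>x\<in>M. mul (mul a x) (star a) \<in> M) \<and>
     M \<inter> neg ` M = {zero}"

text \<open>R(a,b) = (R(a))(b), realised as fractions of polynomials in b over the field
  of fractions of polynomials in a over the reals.\<close>

type_synonym F = "real poly fract poly fract"

definition va :: F where "va = Fract [: Fract [:0, 1:] 1 :] 1"
definition vb :: F where "vb = Fract [:0, 1:] 1"

datatype quat = Quat (q0: F) (q1: F) (q2: F) (q3: F)
  \<comment> \<open>Quat x0 x1 x2 x3 = x0 + x1 i + x2 j + x3 ij\<close>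

instantiation quat :: ring_1
begin
definition "0 = Quat 0 0 0 0"
definition "1 = Quat 1 0 0 0"
definition "x + y = Quat (q0 x + q0 y) (q1 x + q1 y) (q2 x + q2 y) (q3 x + q3 y)"
definition "- x = Quat (- q0 x) (- q1 x) (- q2 x) (- q3 x)"
definition "x - y = Quat (q0 x - q0 y) (q1 x - q1 y) (q2 x - q2 y) (q3 x - q3 y)"
definition "x * y = Quat
   (q0 x * q0 y + va * q1 x * q1 y + vb * q2 x * q2 y - va * vb * q3 x * q3 y)
   (q0 x * q1 y + q1 x * q0 y - vb * q2 x * q3 y + vb * q3 x * q2 y)
   (q0 x * q2 y + q2 x * q0 y + va * q1 x * q3 y - va * q3 x * q1 y)
   (q0 x * q3 y + q3 x * q0 y + q1 x * q2 y - q2 x * q1 y)"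
instance
  by standard (simp_all add: zero_quat_def one_quat_def plus_quat_def uminus_quat_def
      minus_quat_def times_quat_def algebra_simps)
end

definition qi :: quat where "qi = Quat 0 1 0 0"
definition qj :: quat where "qj = Quat 0 0 1 0"

text \<open>The involution determined by i* = i, j* = j (hence (ij)* = ji = -ij, F fixed).\<close>
definition qstar :: "quat \<Rightarrow> quat" where
  "qstar x = Quat (q0 x) (q1 x) (q2 x) (- q3 x)"

definition ofF :: "F \<Rightarrow> quat" where "ofF c = Quat c 0 0 0"
definition Kset :: "quat set" where "Kset = {x. q2 x = 0 \<and> q3 x = 0}"

definition M2K :: "(quat ^ 2 ^ 2) set" where
  "M2K = {X. \<forall>s t. X $ s $ t \<in> Kset}"

definition mstar :: "quat ^ 2 ^ 2 \<Rightarrow> quat ^ 2 ^ 2" where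
  "mstar X = (\<chi> s t. qstar (X $ t $ s))"

definition Amat :: "quat ^ 2 ^ 2" where
  "Amat = (\<chi> s t. if s = t then (if s = 1 then 1 else ofF vb) else 0)"

definition msharp :: "quat ^ 2 ^ 2 \<Rightarrow> quat ^ 2 ^ 2" where
  "msharp X = matrix_inv Amat ** mstar X ** Amat"

definition ebas :: "2 \<Rightarrow> quat" where
  "ebas s = (if s = 1 then 1 else qj)"

definition lreg :: "quat \<Rightarrow> quat ^ 2 ^ 2" where
  "lreg d = (THE X. X \<in> M2K \<and> (\<forall>t. d * ebas t = (\<Sum>s\<in>UNIV. ebas s * X $ s $ t)))"

abbreviation uhc_D :: "quat set \<Rightarrow> bool" where
  "uhc_D M \<equiv> unital_hermitian_cone UNIV (+) (*) qstar 1 0 uminus M"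

abbreviation uhc_M2K :: "(quat ^ 2 ^ 2) set \<Rightarrow> bool" where
  "uhc_M2K L \<equiv> unital_hermitian_cone M2K (+) (**) msharp (mat 1) 0 uminus L"

end

theory Submission imports Defs begin

lemma fdeg_resp:
  fixes p q r s :: "'a::field poly"
  assumes h: "q \<noteq> 0" "s \<noteq> 0" "p * s = r * q"
  shows "(if p = 0 then 0 else int (degree p) - int (degree q)) =
       (if r = 0 then 0 else int (degree r) - int (degree s))"
proof (cases "p = 0")
  case True then show ?thesis using h by auto
next
  case False
  then have "r \<noteq> 0" using h by auto
  have "degree (p * s) = degree (r * q)" using h by simp
  then have "degree p + degree s = degree r + degree q"
    using h False \<open>r\<noteq>0\<close> by (metis degree_mult_eq)
  then show ?thesis using False \<open>r\<noteq>0\<close> by simp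
qed

lemma flead_resp:
  fixes p q r s :: "'a::field poly"
  assumes "q \<noteq> 0" "s \<noteq> 0" "p * s = r * q"
  shows "lead_coeff p / lead_coeff q = lead_coeff r / lead_coeff s"
proof -
  have "lead_coeff p * lead_coeff s = lead_coeff r * lead_coeff q"
    using assms by (metis lead_coeff_mult)
  then show ?thesis
    using assms by (simp add: field_simps)
qed

lift_definition fdeg :: "'a::field poly fract \<Rightarrow> int" is
  "\<lambda>(p,q). if p = 0 then 0 else int (degree p) - int (degree q)"
  unfolding rel_fun_def by (clarify, rule fdeg_resp, auto)

lift_definition flead :: "'a::field poly fract \<Rightarrow> 'a" is
  "\<lambda>(p,q). lead_coeff p / lead_coeff q"
  unfolding rel_fun_def by (clarify, rule flead_resp, auto)

lemma fdeg_Fract: "q \<noteq> 0 \<Longrightarrow> fdeg (Fract p q) = (if p = 0 then 0 else int (degree p) - int (degree q))"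
  by (simp add: Fract.abs_eq fdeg.abs_eq)
lemma flead_Fract: "q \<noteq> 0 \<Longrightarrow> flead (Fract p q) = lead_coeff p / lead_coeff q"
  by (simp add: Fract.abs_eq flead.abs_eq)

lemma PL1: "degree (Q::'a::field poly) < degree P \<Longrightarrow> degree (P+Q) = degree P \<and> lead_coeff (P+Q) = lead_coeff P"
  by (metis add.commute degree_add_eq_left lead_coeff_add_le)

lemma PL2:
  fixes P Q :: "'a::field poly"
  assumes "degree P = degree Q" "lead_coeff P + lead_coeff Q \<noteq> 0"
  shows "degree (P+Q) = degree P \<and> lead_coeff (P+Q) = lead_coeff P + lead_coeff Q"
proof -
  have c: "coeff (P+Q) (degree P) \<noteq> 0" using assms by simp
  then have "degree P \<le> degree (P+Q)" by (rule le_degree)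
  moreover have "degree (P+Q) \<le> degree P" using degree_add_le_max[of P Q] assms by simp
  ultimately have "degree (P+Q) = degree P" by simp
  then show ?thesis using assms by simp
qed

lemma PL3:
  fixes P Q :: "'a::field poly"
  assumes "degree P = degree Q" "lead_coeff P + lead_coeff Q = 0" "P + Q \<noteq> 0"
  shows "degree (P+Q) < degree P"
proof -
  have "degree (P+Q) \<le> degree P" using degree_add_le_max[of P Q] assms by simp
  moreover have "degree (P+Q) \<noteq> degree P"
  proof
    assume "degree (P+Q) = degree P"
    then have "lead_coeff (P+Q) = coeff P (degree P) + coeff Q (degree Q)" using assms by simp
    then have "lead_coeff (P+Q) = 0" using assms by simp
    then show False using assms leading_coeff_0_iff by blast
  qed
  ultimately show ?thesis by simp
qed

lemma Fract_eq0: "q \<noteq> 0 \<Longrightarrow> (Fract p q = 0) = (p = 0)"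
  by (simp add: Zero_fract_def eq_fract)

lemma common_den:
  fixes f g :: "'a::idom fract"
  obtains P Q d where "f = Fract P d" "g = Fract Q d" "d \<noteq> 0"
proof -
  obtain p q where f: "f = Fract p q" "q \<noteq> 0" by (cases f)
  obtain r s where g: "g = Fract r s" "s \<noteq> 0" by (cases g)
  have "f = Fract (p * s) (q * s)" using f g by (simp add: eq_fract)
  moreover have "g = Fract (r * q) (q * s)" using f g by (simp add: eq_fract)
  ultimately show ?thesis using that f g by simp
qed

lemma add_same_den: "d \<noteq> 0 \<Longrightarrow> Fract P d + Fract Q d = Fract (P + Q) (d::'a::idom)"
  by (simp add: eq_fract algebra_simps)

lemma fdeg_nz: "d \<noteq> 0 \<Longrightarrow> P \<noteq> 0 \<Longrightarrow> fdeg (Fract (P::'a::field poly) d) = int (degree P) - int (degree d)"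
  by (simp add: fdeg_Fract)

lemma P1: "(f::'a::field poly fract) \<noteq> 0 \<Longrightarrow> flead f \<noteq> 0"
  by (cases f) (auto simp: flead_Fract Fract_eq0)

lemma P2: "(f::'a::field poly fract) \<noteq> 0 \<Longrightarrow> g \<noteq> 0 \<Longrightarrow> fdeg (f*g) = fdeg f + fdeg g"
  by (cases f; cases g) (auto simp: fdeg_Fract Fract_eq0 degree_mult_eq)

lemma P2': "flead ((f::'a::field poly fract) * g) = flead f * flead g"
  by (cases f; cases g) (auto simp: flead_Fract lead_coeff_mult)

lemma P6: "fdeg (- (f::'a::field poly fract)) = fdeg f \<and> flead (-f) = - flead f"
  by (cases f) (auto simp: flead_Fract fdeg_Fract lead_coeff_minus)

lemma P3:
  fixes f g :: "'a::field poly fract"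
  assumes "f \<noteq> 0" "g = 0 \<or> fdeg g < fdeg f"
  shows "f + g \<noteq> 0 \<and> fdeg (f+g) = fdeg f \<and> flead (f+g) = flead f"
proof (cases "g = 0")
  case True then show ?thesis using assms by simp
next
  case False
  obtain P Q d where e: "f = Fract P d" "g = Fract Q d" "d \<noteq> 0" by (rule common_den)
  have P: "P \<noteq> 0" "Q \<noteq> 0" using e assms False by (auto simp: Fract_eq0)
  have "degree Q < degree P" using assms False P e by (simp add: fdeg_Fract)
  then have h: "degree (P+Q) = degree P \<and> lead_coeff (P+Q) = lead_coeff P" by (rule PL1)
  then have "P + Q \<noteq> 0" using P by (metis leading_coeff_0_iff)
  moreover have fg: "f + g = Fract (P+Q) d" using e by (simp del: add_fract add: add_same_den)
  moreover have "flead (f+g) = lead_coeff (P+Q) / lead_coeff d" using fg e(3) flead_Fract by metis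
  moreover have "fdeg (f+g) = int (degree (P+Q)) - int (degree d)" using fg e(3) \<open>P + Q \<noteq> 0\<close> fdeg_Fract by metis
  ultimately show ?thesis using e h P by (metis Fract_eq0 fdeg_nz flead_Fract)
qed

lemma P4:
  fixes f g :: "'a::field poly fract"
  assumes "f \<noteq> 0" "g \<noteq> 0" "fdeg f = fdeg g" "flead f + flead g \<noteq> 0"
  shows "f + g \<noteq> 0 \<and> fdeg (f+g) = fdeg f \<and> flead (f+g) = flead f + flead g"
proof -
  obtain P Q d where e: "f = Fract P d" "g = Fract Q d" "d \<noteq> 0" by (rule common_den)
  have P: "P \<noteq> 0" "Q \<noteq> 0" using e assms by (auto simp: Fract_eq0)
  have "degree Q = degree P" using assms P e by (simp add: fdeg_Fract)
  moreover have "lead_coeff P + lead_coeff Q \<noteq> 0" using assms e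
    by (simp add: flead_Fract add_divide_distrib[symmetric])
  ultimately have h: "degree (P+Q) = degree P \<and> lead_coeff (P+Q) = lead_coeff P + lead_coeff Q"
    using PL2 by metis
  then have "P + Q \<noteq> 0" using \<open>lead_coeff P + lead_coeff Q \<noteq> 0\<close> by (metis leading_coeff_0_iff)
  moreover have fg: "f + g = Fract (P+Q) d" using e by (simp del: add_fract add: add_same_den)
  moreover have "flead (f+g) = lead_coeff (P+Q) / lead_coeff d" using fg e(3) flead_Fract by metis
  moreover have "fdeg (f+g) = int (degree (P+Q)) - int (degree d)" using fg e(3) \<open>P + Q \<noteq> 0\<close> fdeg_Fract by metis
  ultimately show ?thesis using e h P by (metis Fract_eq0 fdeg_nz flead_Fract add_divide_distrib)
qed

lemma P5:
  fixes f g :: "'a::field poly fract"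
  assumes "f \<noteq> 0" "g \<noteq> 0" "fdeg f = fdeg g" "flead f + flead g = 0" "f + g \<noteq> 0"
  shows "fdeg (f+g) < fdeg f"
proof -
  obtain P Q d where e: "f = Fract P d" "g = Fract Q d" "d \<noteq> 0" by (rule common_den)
  have P: "P \<noteq> 0" "Q \<noteq> 0" using e assms by (auto simp: Fract_eq0)
  have "degree P = degree Q" using assms P e by (simp add: fdeg_Fract)
  moreover have "lead_coeff P + lead_coeff Q = 0" using assms e
    by (simp add: flead_Fract add_divide_distrib[symmetric])
  moreover have fg: "f + g = Fract (P+Q) d" using e by (simp del: add_fract add: add_same_den)
  moreover have "P + Q \<noteq> 0" using assms e fg by (auto simp del: add_fract simp add: Fract_eq0)
  ultimately have "degree (P+Q) < degree P" using PL3 by blast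
  then show ?thesis using e P \<open>P + Q \<noteq> 0\<close> fg by (simp del: add_fract add: fdeg_Fract)
qed

definition gr :: "F \<Rightarrow> int \<times> int" where "gr f = (fdeg f, fdeg (flead f))"
definition lcf :: "F \<Rightarrow> real" where "lcf f = flead (flead f)"
definition lexlt :: "int \<times> int \<Rightarrow> int \<times> int \<Rightarrow> bool" where
  "lexlt x y \<longleftrightarrow> fst x < fst y \<or> (fst x = fst y \<and> snd x < snd y)"

lemma F1: "f \<noteq> 0 \<Longrightarrow> lcf f \<noteq> 0"
  unfolding lcf_def by (intro P1)

lemma flead_nz: "(f::'a::field poly fract) \<noteq> 0 \<Longrightarrow> flead f \<noteq> 0" by (rule P1)

lemma F2: "f \<noteq> 0 \<Longrightarrow> g \<noteq> 0 \<Longrightarrow> gr (f*g) = gr f + gr g \<and> lcf (f*g) = lcf f * lcf g"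
  unfolding gr_def lcf_def by (simp add: P2 P2' flead_nz)

lemma F3:
  assumes "f \<noteq> 0" "g = 0 \<or> lexlt (gr g) (gr f)"
  shows "f + g \<noteq> 0 \<and> gr (f+g) = gr f \<and> lcf (f+g) = lcf f"
proof (cases "g = 0")
  case True then show ?thesis using assms by simp
next
  case False
  then have l: "lexlt (gr g) (gr f)" using assms by simp
  show ?thesis
  proof (cases "fdeg g < fdeg f")
    case True
    then show ?thesis using P3[of f g] assms unfolding gr_def lcf_def by simp
  next
    case False
    then have e: "fdeg f = fdeg g" "fdeg (flead g) < fdeg (flead f)" using l unfolding lexlt_def gr_def by auto
    have A: "flead f + flead g \<noteq> 0 \<and> fdeg (flead f + flead g) = fdeg (flead f) \<and>
       flead (flead f + flead g) = flead (flead f)"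
      using P3[of "flead f" "flead g"] e flead_nz[OF assms(1)] by simp
    have B: "f + g \<noteq> 0 \<and> fdeg (f+g) = fdeg f \<and> flead (f+g) = flead f + flead g"
      using P4[of f g] A e assms \<open>g \<noteq> 0\<close> by simp
    show ?thesis using A B unfolding gr_def lcf_def by simp
  qed
qed

lemma F4:
  assumes "f \<noteq> 0" "g \<noteq> 0" "gr f = gr g" "lcf f + lcf g \<noteq> 0"
  shows "f + g \<noteq> 0 \<and> gr (f+g) = gr f \<and> lcf (f+g) = lcf f + lcf g"
proof -
  have e: "fdeg f = fdeg g" "fdeg (flead f) = fdeg (flead g)" using assms(3) unfolding gr_def by auto
  have A: "flead f + flead g \<noteq> 0 \<and> fdeg (flead f + flead g) = fdeg (flead f) \<and>
       flead (flead f + flead g) = flead (flead f) + flead (flead g)"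
    using P4[of "flead f" "flead g"] e flead_nz[OF assms(1)] flead_nz[OF assms(2)] assms unfolding lcf_def by simp
  have B: "f + g \<noteq> 0 \<and> fdeg (f+g) = fdeg f \<and> flead (f+g) = flead f + flead g"
    using P4[of f g] A e assms by simp
  show ?thesis using A B unfolding gr_def lcf_def by simp
qed

lemma lex_cases: "lexlt x y \<or> x = y \<or> lexlt y x"
  unfolding lexlt_def by (cases x; cases y) auto

lemma lex_trans: "lexlt x y \<Longrightarrow> lexlt y z \<Longrightarrow> lexlt x z"
  unfolding lexlt_def by auto

lemma F5:
  assumes "f = 0 \<or> lexlt (gr f) d" "g = 0 \<or> lexlt (gr g) d"
  shows "f + g = 0 \<or> lexlt (gr (f+g)) d"
proof (cases "f = 0 \<or> g = 0")
  case True then show ?thesis using assms by auto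
next
  case False
  then have nz: "f \<noteq> 0" "g \<noteq> 0" by auto
  have lf: "lexlt (gr f) d" and lg: "lexlt (gr g) d" using assms nz by auto
  consider "lexlt (gr g) (gr f)" | "gr f = gr g" | "lexlt (gr f) (gr g)" using lex_cases by blast
  then show ?thesis
  proof cases
    case 1 then show ?thesis using F3[of f g] nz lf by simp
  next
    case 3 then show ?thesis using F3[of g f] nz lg by (simp add: add.commute)
  next
    case 2
    show ?thesis
    proof (cases "lcf f + lcf g = 0")
      case False then show ?thesis using F4[of f g] nz 2 lf by simp
    next
      case True
      show ?thesis
      proof (cases "f + g = 0")
        case True then show ?thesis by simp
      next
        case fg: False
        have e: "fdeg f = fdeg g" "fdeg (flead f) = fdeg (flead g)" using 2 unfolding gr_def by auto
        have "lexlt (gr (f+g)) (gr f)"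
        proof (cases "flead f + flead g = 0")
          case True
          then have "fdeg (f+g) < fdeg f" using P5[of f g] nz e fg by simp
          then show ?thesis unfolding lexlt_def gr_def by simp
        next
          case False
          have B: "fdeg (f+g) = fdeg f \<and> flead (f+g) = flead f + flead g"
            using P4[of f g] False e nz by simp
          have "fdeg (flead f + flead g) < fdeg (flead f)"
            using P5[of "flead f" "flead g"] False e flead_nz[OF nz(1)] flead_nz[OF nz(2)] \<open>lcf f + lcf g = 0\<close>
            unfolding lcf_def by simp
          then show ?thesis using B unfolding lexlt_def gr_def by simp
        qed
        then show ?thesis using lf lex_trans by blast
      qed
    qed
  qed
qed

lemma F6: "gr (-f) = gr f \<and> lcf (-f) = - lcf f"
  unfolding gr_def lcf_def by (simp add: P6)

lemma F7: "gr va = (0,1) \<and> lcf va = 1 \<and> gr vb = (1,0) \<and> lcf vb = 1 \<and> gr 1 = (0,0) \<and> lcf 1 = 1"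
proof -
  have t0: "Fract [:0, 1:] (1::real poly) \<noteq> 0" by (simp add: Fract_eq0)
  have "(1::real poly fract) = Fract 1 1" by (simp add: One_fract_def)
  have o: "fdeg (1::'a::field poly fract) = 0 \<and> flead (1::'a poly fract) = 1"
    by (simp add: One_fract_def fdeg_Fract flead_Fract)
  show ?thesis
    by (simp add: va_def vb_def gr_def lcf_def fdeg_Fract flead_Fract t0 o)
qed


section \<open>Quaternion leading terms\<close>

definition cmp :: "quat \<Rightarrow> nat \<Rightarrow> F" where
  "cmp x k = (if k = 0 then q0 x else if k = 1 then q1 x else if k = 2 then q2 x else if k = 3 then q3 x else 0)"

definition off :: "nat \<Rightarrow> int \<times> int" where
  "off k = (if k \<ge> 2 then 1 else 0, if odd k then 1 else 0)"

definition dv :: "nat \<Rightarrow> F \<Rightarrow> int \<times> int" where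
  "dv k f = (2 * fst (gr f) + fst (off k), 2 * snd (gr f) + snd (off k))"

definition qtyp :: "int \<times> int \<Rightarrow> nat" where
  "qtyp d = (if odd (fst d) then 2 else 0) + (if odd (snd d) then 1 else 0)"

definition kx :: "nat \<Rightarrow> nat \<Rightarrow> nat" where
  "kx k l = (if (k \<ge> 2) = (l \<ge> 2) then 0 else 2) + (if odd k = odd l then 0 else 1)"

definition gam :: "nat \<Rightarrow> nat \<Rightarrow> F" where
  "gam k l = (if k = 0 \<or> l = 0 then 1 else
     if k = 1 then (if l = 1 then va else if l = 2 then 1 else va) else
     if k = 2 then (if l = 1 then -1 else if l = 2 then vb else - vb) else
     (if l = 1 then - va else if l = 2 then vb else - (va * vb)))"

definition gs :: "nat \<Rightarrow> nat \<Rightarrow> real" where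
  "gs k l = (if (k = 2 \<and> l = 1) \<or> (k = 2 \<and> l = 3) \<or> (k = 3 \<and> l = 1) \<or> (k = 3 \<and> l = 3) then -1 else 1)"

lemma sum4: "(\<Sum>k<4. f k) = f 0 + f 1 + f 2 + f (3::nat)"
  by (simp add: eval_nat_numeral)

lemma cmp_mult0: "cmp (x*y) m = (\<Sum>k<4. gam k (kx k m) * cmp x k * cmp y (kx k m))" if "m = 0"
  using that by (simp add: sum4 cmp_def kx_def gam_def times_quat_def)
lemma cmp_mult1: "cmp (x*y) m = (\<Sum>k<4. gam k (kx k m) * cmp x k * cmp y (kx k m))" if "m = 1"
  using that by (simp add: sum4 cmp_def kx_def gam_def times_quat_def)
lemma cmp_mult2: "cmp (x*y) m = (\<Sum>k<4. gam k (kx k m) * cmp x k * cmp y (kx k m))" if "m = 2"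
  using that by (simp add: sum4 cmp_def kx_def gam_def times_quat_def)
lemma cmp_mult3: "cmp (x*y) m = (\<Sum>k<4. gam k (kx k m) * cmp x k * cmp y (kx k m))" if "m = 3"
  using that by (simp add: sum4 cmp_def kx_def gam_def times_quat_def)
lemma cmp_mult: "m < 4 \<Longrightarrow> cmp (x*y) m = (\<Sum>k<4. gam k (kx k m) * cmp x k * cmp y (kx k m))"
proof -
  assume "m < 4"
  then have "m = 0 \<or> m = 1 \<or> m = 2 \<or> m = 3" by auto
  then show ?thesis
    by (elim disjE) (erule cmp_mult0 cmp_mult1 cmp_mult2 cmp_mult3)+
qed

lemma gr_neg[simp]: "gr (-f) = gr f" and lcf_neg[simp]: "lcf (-f) = - lcf f" using F6 by auto
lemma grva[simp]: "gr va = (0,1)" "lcf va = 1" "gr vb = (1,0)" "lcf vb = 1" "gr 1 = (0,0)" "lcf 1 = 1"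
  using F7 by auto
lemma lcf0[simp]: "lcf 0 = 0" by (simp add: lcf_def Zero_fract_def flead_Fract)
lemma vnz[simp]: "va \<noteq> 0" "vb \<noteq> 0" by (metis grva lcf0 zero_neq_one)+
lemma grab[simp]: "gr (va * vb) = (1,1)" "lcf (va * vb) = 1"
proof -
  have "gr (va * vb) = gr va + gr vb \<and> lcf (va * vb) = lcf va * lcf vb" using F2[of va vb] by simp
  then show "gr (va * vb) = (1,1)" "lcf (va * vb) = 1" by simp_all
qed
lemma vabnz[simp]: "va * vb \<noteq> 0" by simp

lemma gam_props: "k < 4 \<Longrightarrow> l < 4 \<Longrightarrow> gam k l \<noteq> 0 \<and> lcf (gam k l) = gs k l \<and>
   2 * fst (gr (gam k l)) + fst (off (kx k l)) = fst (off k) + fst (off l) \<and>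
   2 * snd (gr (gam k l)) + snd (off (kx k l)) = snd (off k) + snd (off l)"
proof -
  assume "k < 4" "l < 4"
  then have "k = 0 \<or> k = 1 \<or> k = 2 \<or> k = 3" "l = 0 \<or> l = 1 \<or> l = 2 \<or> l = 3" by auto
  then show ?thesis
    by (elim disjE) (simp_all add: gam_def gs_def off_def kx_def)
qed


definition lexle :: "int \<times> int \<Rightarrow> int \<times> int \<Rightarrow> bool" where
  "lexle x y \<longleftrightarrow> lexlt x y \<or> x = y"

lemma lexlt_irrefl[simp]: "\<not> lexlt x x" unfolding lexlt_def by auto
lemma lexlt_asym: "lexlt x y \<Longrightarrow> \<not> lexlt y x" unfolding lexlt_def by auto
lemma lex_add1: "lexlt a b \<Longrightarrow> lexle c d \<Longrightarrow> lexlt (a+c) (b+d)"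
  unfolding lexlt_def lexle_def by (cases a; cases b; cases c; cases d) auto
lemma lex_add2: "lexle a b \<Longrightarrow> lexlt c d \<Longrightarrow> lexlt (a+c) (b+d)"
  unfolding lexlt_def lexle_def by (cases a; cases b; cases c; cases d) auto
lemma lex_lt_le_trans: "lexlt a b \<Longrightarrow> lexle b c \<Longrightarrow> lexlt a c"
  unfolding lexlt_def lexle_def by auto
lemma lex_not_le: "\<not> lexle a b \<Longrightarrow> lexlt b a"
  using lex_cases unfolding lexle_def by blast

lemma lexlt_dv: "lexlt (dv m f) (dv m g) \<longleftrightarrow> lexlt (gr f) (gr g)"
  unfolding lexlt_def dv_def by auto
lemma dv_eq: "dv m f = dv m g \<longleftrightarrow> gr f = gr g"
  unfolding dv_def by (cases "gr f"; cases "gr g") auto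

lemma qtyp_dv: "k < 4 \<Longrightarrow> qtyp (dv k f) = k"
proof -
  assume "k < 4"
  then have "k = 0 \<or> k = 1 \<or> k = 2 \<or> k = 3" by auto
  then show ?thesis by (elim disjE) (simp_all add: qtyp_def dv_def off_def)
qed

lemma qtyp_lt: "qtyp D < 4" unfolding qtyp_def by auto

lemma Fmax:
  assumes "f \<noteq> 0" "g \<noteq> 0" "f + g \<noteq> 0"
  shows "lexle (gr (f+g)) (gr f) \<or> lexle (gr (f+g)) (gr g)"
proof (rule ccontr)
  assume "\<not> ?thesis"
  then have "lexlt (gr f) (gr (f+g))" "lexlt (gr g) (gr (f+g))" using lex_not_le by auto
  then have "f + g = 0 \<or> lexlt (gr (f+g)) (gr (f+g))" by (intro F5) auto
  then show False using assms by simp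
qed

definition sm :: "nat \<Rightarrow> int \<times> int \<Rightarrow> F \<Rightarrow> bool" where
  "sm m D f \<longleftrightarrow> f = 0 \<or> lexlt (dv m f) D"
definition ld :: "nat \<Rightarrow> int \<times> int \<Rightarrow> real \<Rightarrow> F \<Rightarrow> bool" where
  "ld m D c f \<longleftrightarrow> f \<noteq> 0 \<and> dv m f = D \<and> lcf f = c"

lemma sum_sm: "sm m D f \<Longrightarrow> sm m D g \<Longrightarrow> sm m D (f+g)"
proof -
  assume a: "sm m D f" "sm m D g"
  show ?thesis
  proof (cases "f = 0 \<or> g = 0 \<or> f + g = 0")
    case True then show ?thesis using a unfolding sm_def by auto
  next
    case False
    then have "lexle (gr (f+g)) (gr f) \<or> lexle (gr (f+g)) (gr g)" using Fmax by auto
    then have "lexle (dv m (f+g)) (dv m f) \<or> lexle (dv m (f+g)) (dv m g)"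
      unfolding lexle_def using lexlt_dv dv_eq by auto
    then show ?thesis using a False unfolding sm_def lexle_def lexlt_def by auto
  qed
qed

lemma sum_ld: "ld m D c f \<Longrightarrow> sm m D g \<Longrightarrow> ld m D c (f+g)"
proof -
  assume a: "ld m D c f" "sm m D g"
  then have "g = 0 \<or> lexlt (gr g) (gr f)" unfolding ld_def sm_def using lexlt_dv by metis
  then have "f + g \<noteq> 0 \<and> gr (f+g) = gr f \<and> lcf (f+g) = lcf f" using F3 a unfolding ld_def by blast
  then show ?thesis using a unfolding ld_def using dv_eq by metis
qed

lemma sum_sm_set: "finite S \<Longrightarrow> (\<forall>k\<in>S. sm m D (T k)) \<Longrightarrow> sm m D (sum T S)"
proof (induction S rule: finite_induct)
  case empty then show ?case by (simp add: sm_def)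
next
  case (insert x F)
  then have "sm m D (T x)" "sm m D (sum T F)" by auto
  then have "sm m D (T x + sum T F)" by (rule sum_sm)
  then show ?case using insert by simp
qed

lemma sum_ld_set:
  assumes "finite S" "K \<in> S" "ld m D c (T K)" "\<forall>k\<in>S-{K}. sm m D (T k)"
  shows "ld m D c (sum T S)"
proof -
  have "sum T S = T K + sum T (S - {K})" using assms by (simp add: sum.remove)
  moreover have "sm m D (sum T (S - {K}))" using assms by (intro sum_sm_set) auto
  ultimately show ?thesis using sum_ld assms by simp
qed

lemma kx_lt: "k < 4 \<Longrightarrow> l < 4 \<Longrightarrow> kx k l < 4" unfolding kx_def by auto
lemma kx_kx: "k < 4 \<Longrightarrow> m < 4 \<Longrightarrow> kx k (kx k m) = m"
proof -
  assume "k < 4" "m < 4"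
  then have "k = 0 \<or> k = 1 \<or> k = 2 \<or> k = 3" "m = 0 \<or> m = 1 \<or> m = 2 \<or> m = 3" by auto
  then show ?thesis by (elim disjE) (simp_all add: kx_def)
qed
lemma qtyp_add: "qtyp (D + E) = kx (qtyp D) (qtyp E)"
  unfolding qtyp_def kx_def by (cases D; cases E) auto

lemma term_ld:
  assumes "k < 4" "l < 4" "xk \<noteq> 0" "yl \<noteq> 0"
  shows "ld (kx k l) (dv k xk + dv l yl) (gs k l * lcf xk * lcf yl) (gam k l * xk * yl)"
proof -
  have g: "gam k l \<noteq> 0 \<and> lcf (gam k l) = gs k l \<and>
   2 * fst (gr (gam k l)) + fst (off (kx k l)) = fst (off k) + fst (off l) \<and>
   2 * snd (gr (gam k l)) + snd (off (kx k l)) = snd (off k) + snd (off l)"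
    using gam_props assms by blast
  have nz1: "gam k l * xk \<noteq> 0" using g assms by simp
  have "gr (gam k l * xk) = gr (gam k l) + gr xk \<and> lcf (gam k l * xk) = lcf (gam k l) * lcf xk"
    using F2 g assms by blast
  moreover have "gr (gam k l * xk * yl) = gr (gam k l * xk) + gr yl \<and>
     lcf (gam k l * xk * yl) = lcf (gam k l * xk) * lcf yl"
    using F2 nz1 assms by blast
  ultimately show ?thesis using g nz1 assms unfolding ld_def dv_def
    by (auto simp: algebra_simps)
qed


definition QL :: "quat \<Rightarrow> int \<times> int \<Rightarrow> real \<Rightarrow> bool" where
  "QL x D c \<longleftrightarrow> (\<forall>k<4. (k = qtyp D \<longrightarrow> ld k D c (cmp x k)) \<and> (k \<noteq> qtyp D \<longrightarrow> sm k D (cmp x k)))"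

lemma QL_le: "QL x D c \<Longrightarrow> k < 4 \<Longrightarrow> cmp x k = 0 \<or> lexle (dv k (cmp x k)) D"
  unfolding QL_def ld_def sm_def lexle_def by metis
lemma QL_lt: "QL x D c \<Longrightarrow> k < 4 \<Longrightarrow> k \<noteq> qtyp D \<Longrightarrow> sm k D (cmp x k)"
  unfolding QL_def by blast
lemma QL_ld: "QL x D c \<Longrightarrow> ld (qtyp D) D c (cmp x (qtyp D))"
  unfolding QL_def using qtyp_lt by blast

lemma term_sm:
  assumes "k < 4" "l < 4"
    and x: "cmp x k = 0 \<or> lexle (dv k (cmp x k)) D"
    and y: "cmp y l = 0 \<or> lexle (dv l (cmp y l)) E"
    and s: "sm k D (cmp x k) \<or> sm l E (cmp y l)"
  shows "sm (kx k l) (D + E) (gam k l * cmp x k * cmp y l)"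
proof (cases "cmp x k = 0 \<or> cmp y l = 0")
  case True then show ?thesis unfolding sm_def by auto
next
  case False
  then have t: "ld (kx k l) (dv k (cmp x k) + dv l (cmp y l)) (gs k l * lcf (cmp x k) * lcf (cmp y l))
     (gam k l * cmp x k * cmp y l)" using term_ld assms by blast
  have "lexlt (dv k (cmp x k) + dv l (cmp y l)) (D + E)"
    using s x y False unfolding sm_def lexle_def using lex_add1 lex_add2 lexle_def by metis
  then show ?thesis using t unfolding sm_def ld_def by auto
qed

lemma QL_mult:
  assumes X: "QL x D c" and Y: "QL y E e"
  shows "QL (x*y) (D+E) (gs (qtyp D) (qtyp E) * c * e)"
  unfolding QL_def
proof (intro allI impI conjI)
  let ?K = "qtyp D" and ?L = "qtyp E"
  have K: "?K < 4" "?L < 4" using qtyp_lt by auto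
  fix m :: nat assume m: "m < 4"
  define T where "T k = gam k (kx k m) * cmp x k * cmp y (kx k m)" for k
  have cm: "cmp (x*y) m = sum T {..<4}" using cmp_mult[OF m] unfolding T_def by simp
  have kk: "k < 4 \<Longrightarrow> kx k (kx k m) = m" for k using kx_kx m by blast
  have small: "sm m (D+E) (T k)" if "k < 4" "k \<noteq> ?K \<or> kx k m \<noteq> ?L" for k
  proof -
    have l: "kx k m < 4" using kx_lt that m by auto
    have "sm (kx k (kx k m)) (D + E) (gam k (kx k m) * cmp x k * cmp y (kx k m))"
      using term_sm[OF that(1) l QL_le[OF X that(1)] QL_le[OF Y l]] QL_lt[OF X that(1)] QL_lt[OF Y l] that
      by blast
    then show ?thesis using kk[OF that(1)] unfolding T_def by simp
  qed
  {
    assume "m = qtyp (D+E)"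
    then have mK: "m = kx ?K ?L" by (simp add: qtyp_add)
    have kl: "kx ?K m = ?L" using mK kx_kx K by simp
    have "ld (kx ?K ?L) (dv ?K (cmp x ?K) + dv ?L (cmp y ?L)) (gs ?K ?L * lcf (cmp x ?K) * lcf (cmp y ?L))
       (gam ?K ?L * cmp x ?K * cmp y ?L)"
      using term_ld K QL_ld[OF X] QL_ld[OF Y] unfolding ld_def by blast
    then have "ld m (D+E) (gs ?K ?L * c * e) (T ?K)"
      using QL_ld[OF X] QL_ld[OF Y] mK kl unfolding T_def ld_def by simp
    moreover have "\<forall>k\<in>{..<4} - {?K}. sm m (D+E) (T k)" using small by auto
    ultimately have "ld m (D+E) (gs ?K ?L * c * e) (sum T {..<4})"
      using sum_ld_set[of "{..<4}" ?K] K by blast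
    then show "ld m (D+E) (gs ?K ?L * c * e) (cmp (x*y) m)" using cm by simp
  }
  {
    assume "m \<noteq> qtyp (D+E)"
    then have mK: "m \<noteq> kx ?K ?L" by (simp add: qtyp_add)
    have "\<forall>k\<in>{..<4}. sm m (D+E) (T k)"
    proof
      fix k assume k: "k \<in> {..<(4::nat)}"
      have "k \<noteq> ?K \<or> kx k m \<noteq> ?L"
      proof (rule ccontr)
        assume "\<not> ?thesis"
        then have "k = ?K" "kx k m = ?L" by auto
        then have "kx ?K ?L = m" using kk[of ?K] K(1) by metis
        then show False using mK by simp
      qed
      then show "sm m (D+E) (T k)" using small k by auto
    qed
    then have "sm m (D+E) (sum T {..<4})" by (intro sum_sm_set) auto
    then show "sm m (D+E) (cmp (x*y) m)" using cm by simp
  }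
qed


lemma cmp_add: "cmp (x+y) k = cmp x k + cmp y k" by (simp add: cmp_def plus_quat_def)
lemma cmp_neg: "cmp (-x) k = - cmp x k" by (simp add: cmp_def uminus_quat_def)
lemma cmp_star: "cmp (qstar x) k = (if k = 3 then - cmp x k else cmp x k)" by (simp add: cmp_def qstar_def)

lemma ld_neg: "ld k D c f \<Longrightarrow> ld k D (-c) (-f)" unfolding ld_def dv_def by simp
lemma sm_neg: "sm k D f \<Longrightarrow> sm k D (-f)" unfolding sm_def dv_def by simp

lemma QL_neg: "QL x D c \<Longrightarrow> QL (-x) D (-c)"
  unfolding QL_def cmp_neg using ld_neg sm_neg by blast

lemma QL_star: "QL x D c \<Longrightarrow> QL (qstar x) D (if qtyp D = 3 then -c else c)"
proof -
  assume X: "QL x D c"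
  show ?thesis unfolding QL_def cmp_star
  proof (intro allI impI conjI)
    fix k :: nat assume k: "k < 4"
    { assume kt: "k = qtyp D"
      have a: "ld k D c (cmp x k)" using QL_ld[OF X] kt by simp
      show "ld k D (if qtyp D = 3 then -c else c) (if k = 3 then - cmp x k else cmp x k)"
      proof (cases "k = 3")
        case True then show ?thesis using ld_neg[OF a] kt by simp
      next
        case False then show ?thesis using a kt by simp
      qed }
    { assume "k \<noteq> qtyp D" then show "sm k D (if k = 3 then - cmp x k else cmp x k)"
        using QL_lt[OF X k] sm_neg[OF QL_lt[OF X k]] by (cases "k = 3") simp_all }
  qed
qed

lemma QL_add1:
  assumes X: "QL x D c" and Y: "QL y E e" and l: "lexlt D E"
  shows "QL (x+y) E e"
  unfolding QL_def cmp_add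
proof (intro allI impI conjI)
  fix k :: nat assume k: "k < 4"
  have sx: "sm k E (cmp x k)" using QL_le[OF X k] l lex_lt_le_trans unfolding sm_def lexle_def
    by (metis lexlt_def)
  { assume "k = qtyp E"
    then have "ld k E e (cmp y k)" using QL_ld[OF Y] by simp
    then have "ld k E e (cmp y k + cmp x k)" using sx sum_ld by blast
    then show "ld k E e (cmp x k + cmp y k)" by (simp add: add.commute) }
  { assume "k \<noteq> qtyp E"
    then show "sm k E (cmp x k + cmp y k)" using sx QL_lt[OF Y k] sum_sm by blast }
qed

lemma QL_add2:
  assumes X: "QL x D c" and Y: "QL y D e" and ce: "c + e \<noteq> 0"
  shows "QL (x+y) D (c+e)"
  unfolding QL_def cmp_add
proof (intro allI impI conjI)
  fix k :: nat assume k: "k < 4"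
  { assume "k = qtyp D"
    then have a: "ld k D c (cmp x k)" "ld k D e (cmp y k)" using QL_ld[OF X] QL_ld[OF Y] by simp_all
    then have "gr (cmp x k) = gr (cmp y k)" unfolding ld_def using dv_eq by metis
    then have "cmp x k + cmp y k \<noteq> 0 \<and> gr (cmp x k + cmp y k) = gr (cmp x k) \<and>
       lcf (cmp x k + cmp y k) = lcf (cmp x k) + lcf (cmp y k)"
      using F4 a ce unfolding ld_def by auto
    then show "ld k D (c+e) (cmp x k + cmp y k)" using a unfolding ld_def using dv_eq by metis }
  { assume "k \<noteq> qtyp D"
    then show "sm k D (cmp x k + cmp y k)" using QL_lt[OF X k] QL_lt[OF Y k] sum_sm by blast }
qed

lemma QL_uniq:
  assumes X: "QL x D c" and Y: "QL x E e"
  shows "D = E \<and> c = e"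
proof -
  have a: "ld (qtyp D) D c (cmp x (qtyp D))" using QL_ld[OF X] .
  have b: "ld (qtyp E) E e (cmp x (qtyp E))" using QL_ld[OF Y] .
  have "D = E"
  proof (rule ccontr)
    assume ne: "D \<noteq> E"
    have "qtyp D \<noteq> qtyp E"
    proof
      assume "qtyp D = qtyp E"
      then show False using a b ne unfolding ld_def by auto
    qed
    then have "sm (qtyp D) E (cmp x (qtyp D))" "sm (qtyp E) D (cmp x (qtyp E))"
      using QL_lt[OF Y] QL_lt[OF X] qtyp_lt by auto
    then have "lexlt D E" "lexlt E D" using a b unfolding sm_def ld_def by auto
    then show False using lexlt_asym by blast
  qed
  then show ?thesis using a b unfolding ld_def by auto
qed

lemma argmax_lex:
  assumes "finite S" "S \<noteq> {}"
  shows "\<exists>K\<in>S. \<forall>k\<in>S. \<not> lexlt (h K) (h k)"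
  using assms
proof (induction S rule: finite_ne_induct)
  case (singleton x) then show ?case by simp
next
  case (insert x F)
  then obtain K where K: "K \<in> F" "\<forall>k\<in>F. \<not> lexlt (h K) (h k)" by blast
  show ?case
  proof (cases "lexlt (h K) (h x)")
    case True
    have "\<forall>k\<in>insert x F. \<not> lexlt (h x) (h k)"
    proof (intro ballI notI)
      fix k assume k: "k \<in> insert x F" and l: "lexlt (h x) (h k)"
      from True l have "lexlt (h K) (h k)" by (rule lex_trans)
      then show False using k K l by auto
    qed
    then show ?thesis by blast
  next
    case False then show ?thesis using K by blast
  qed
qed

lemma quat_nz: "x \<noteq> 0 \<Longrightarrow> \<exists>k<4. cmp x k \<noteq> 0"
proof (rule ccontr)
  assume "x \<noteq> 0" "\<not> (\<exists>k<4. cmp x k \<noteq> 0)"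
  then have "cmp x 0 = 0" "cmp x 1 = 0" "cmp x 2 = 0" "cmp x 3 = 0" by auto
  then have "x = 0" by (cases x) (simp add: cmp_def zero_quat_def)
  then show False using \<open>x \<noteq> 0\<close> by simp
qed

lemma QL_exists:
  assumes "x \<noteq> 0" shows "\<exists>D c. QL x D c"
proof -
  define S where "S = {k. k < 4 \<and> cmp x k \<noteq> 0}"
  define h where "h k = dv k (cmp x k)" for k
  have "finite S" "S \<noteq> {}" using quat_nz[OF assms] unfolding S_def by auto
  then obtain K where K: "K \<in> S" "\<forall>k\<in>S. \<not> lexlt (h K) (h k)" using argmax_lex by blast
  have tK: "qtyp (h K) = K" using K qtyp_dv unfolding S_def h_def by auto
  have "QL x (h K) (lcf (cmp x K))"
    unfolding QL_def
  proof (intro allI impI conjI)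
    fix k :: nat assume k: "k < 4"
    { assume "k = qtyp (h K)" then show "ld k (h K) (lcf (cmp x K)) (cmp x k)"
        using tK K unfolding ld_def S_def h_def by auto }
    { assume ne: "k \<noteq> qtyp (h K)"
      show "sm k (h K) (cmp x k)"
      proof (cases "cmp x k = 0")
        case True then show ?thesis by (simp add: sm_def)
      next
        case False
        then have "k \<in> S" using k unfolding S_def by auto
        then have "\<not> lexlt (h K) (h k)" using K by auto
        moreover have "h k \<noteq> h K" using ne tK qtyp_dv[OF k] unfolding h_def by metis
        ultimately have "lexlt (h k) (h K)" using lex_cases by blast
        then show ?thesis unfolding sm_def h_def by simp
      qed }
  qed
  then show ?thesis by blast
qed


lemma qstar_mult: "qstar (x * y) = qstar y * qstar x"
  by (simp add: qstar_def times_quat_def algebra_simps)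
lemma qstar_qstar[simp]: "qstar (qstar x) = x" by (simp add: qstar_def)
lemma qstar_add: "qstar (x + y) = qstar x + qstar y" by (simp add: qstar_def plus_quat_def)
lemma qstar_zero[simp]: "qstar 0 = 0" by (simp add: qstar_def zero_quat_def)
lemma qstar_one[simp]: "qstar 1 = 1" by (simp add: qstar_def one_quat_def)
lemma qstar_neg: "qstar (-x) = - qstar x" by (simp add: qstar_def uminus_quat_def)

lemma neg_self_F: "(a::F) = - a \<Longrightarrow> a = 0"
proof (rule ccontr)
  assume "a = - a" "a \<noteq> 0"
  then have "lcf a = - lcf a" by (metis lcf_neg)
  then have "lcf a = 0" by simp
  then show False using F1 \<open>a \<noteq> 0\<close> by simp
qed

lemma sym_cmp3: "qstar x = x \<Longrightarrow> cmp x 3 = 0"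
proof -
  assume "qstar x = x"
  then have "q3 x = - q3 x" by (metis qstar_def quat.sel(4))
  then show ?thesis using neg_self_F by (simp add: cmp_def)
qed

lemma QL_sym_typ: "QL x D c \<Longrightarrow> qstar x = x \<Longrightarrow> qtyp D \<noteq> 3"
  using QL_ld sym_cmp3 unfolding ld_def by metis

definition sg :: "real \<Rightarrow> int \<times> int \<Rightarrow> real" where
  "sg s D = (if qtyp D = 1 then (if fst D mod 4 = 0 then 1 else -1)
     else if qtyp D = 2 then s * (if snd D mod 4 = 0 then 1 else -1) else 1)"

lemma mod4_shift: "even (d::int) \<Longrightarrow> ((d + 2 * p) mod 4 = 0 \<longleftrightarrow> (if odd p then \<not> d mod 4 = 0 else d mod 4 = 0))"
  by presburger

lemma sign_lemma:
  assumes "qtyp D \<noteq> 3"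
  shows "sg s (\<delta> + D + \<delta>) * (gs (kx (qtyp \<delta>) (qtyp D)) (qtyp \<delta>) * gs (qtyp \<delta>) (qtyp D) *
          (if qtyp \<delta> = 3 then -1 else 1)) = sg s D"
proof -
  obtain p1 p2 where d: "\<delta> = (p1, p2)" by (cases \<delta>)
  obtain d1 d2 where D: "D = (d1, d2)" by (cases D)
  have e: "\<delta> + D + \<delta> = (d1 + 2 * p1, d2 + 2 * p2)" using d D by simp
  have s1: "even d1 \<Longrightarrow> ((d1 + 2 * p1) mod 4 = 0 \<longleftrightarrow> (if odd p1 then \<not> d1 mod 4 = 0 else d1 mod 4 = 0))"
    by (rule mod4_shift)
  have s2: "even d2 \<Longrightarrow> ((d2 + 2 * p2) mod 4 = 0 \<longleftrightarrow> (if odd p2 then \<not> d2 mod 4 = 0 else d2 mod 4 = 0))"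
    by (rule mod4_shift)
  have o1: "odd (d1 + 2 * p1) = odd d1" "odd (d2 + 2 * p2) = odd d2" by presburger+
  have td: "qtyp \<delta> = (if odd p1 then 2 else 0) + (if odd p2 then 1 else 0)" using d by (simp add: qtyp_def)
  have tD: "qtyp D = (if odd d1 then 2 else 0) + (if odd d2 then 1 else 0)" using D by (simp add: qtyp_def)
  have tE: "qtyp (\<delta> + D + \<delta>) = qtyp D" using e D o1 by (simp add: qtyp_def)
  have sgE: "sg s (\<delta> + D + \<delta>) = (if qtyp D = 1 then (if (d1 + 2 * p1) mod 4 = 0 then 1 else -1)
     else if qtyp D = 2 then s * (if (d2 + 2 * p2) mod 4 = 0 then 1 else -1) else 1)"
    using tE e by (simp add: sg_def)
  have sgD: "sg s D = (if qtyp D = 1 then (if d1 mod 4 = 0 then 1 else -1)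
     else if qtyp D = 2 then s * (if d2 mod 4 = 0 then 1 else -1) else 1)"
    using D by (simp add: sg_def)
  show ?thesis
    unfolding sgE sgD td tD using assms[unfolded tD] s1 s2
    by (cases "odd p1"; cases "odd p2"; cases "odd d1"; cases "odd d2"; simp add: kx_def gs_def)
qed

definition Mc :: "real \<Rightarrow> quat set" where
  "Mc s = {x. qstar x = x \<and> (x = 0 \<or> (\<exists>D c. QL x D c \<and> 0 < c * sg s D))}"


lemma ld_lcf_nz: "ld k D c f \<Longrightarrow> c \<noteq> 0" unfolding ld_def using F1 by auto

lemma QL_c_nz: "QL x D c \<Longrightarrow> c \<noteq> 0" using QL_ld ld_lcf_nz by blast

lemma QL_one: "QL 1 (0,0) 1"
  unfolding QL_def
proof (intro allI impI conjI)
  fix k :: nat assume k: "k < 4"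
  { assume "k = qtyp (0,0)" then have "k = 0" by (simp add: qtyp_def)
    then show "ld k (0,0) 1 (cmp 1 k)" by (simp add: ld_def cmp_def one_quat_def dv_def off_def) }
  { assume "k \<noteq> qtyp (0,0)" then have "k \<noteq> 0" by (simp add: qtyp_def)
    then show "sm k (0,0) (cmp 1 k)" by (simp add: sm_def cmp_def one_quat_def) }
qed

lemma QL_qj: "QL qj (1,0) 1"
  unfolding QL_def
proof (intro allI impI conjI)
  fix k :: nat assume k: "k < 4"
  { assume "k = qtyp (1,0)" then have "k = 2" by (simp add: qtyp_def)
    then show "ld k (1,0) 1 (cmp qj k)" by (simp add: ld_def cmp_def qj_def dv_def off_def) }
  { assume "k \<noteq> qtyp (1,0)" then have "k \<noteq> 2" by (simp add: qtyp_def)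
    then show "sm k (1,0) (cmp qj k)" by (simp add: sm_def cmp_def qj_def) }
qed

lemma Mc_pointed:
  assumes "x \<in> Mc s" "- x \<in> Mc s" shows "x = 0"
proof (rule ccontr)
  assume nz: "x \<noteq> 0"
  then obtain D c where X: "QL x D c" "0 < c * sg s D" using assms(1) unfolding Mc_def by auto
  have "- x \<noteq> 0" using nz by simp
  then obtain E e where Y: "QL (-x) E e" "0 < e * sg s E" using assms(2) unfolding Mc_def by auto
  have "E = D \<and> e = - c" using QL_uniq[OF Y(1) QL_neg[OF X(1)]] by simp
  then show False using X Y by simp
qed

lemma Mc_add:
  assumes "x \<in> Mc s" "y \<in> Mc s" shows "x + y \<in> Mc s"
proof -
  have sx: "qstar x = x" "qstar y = y" using assms unfolding Mc_def by auto
  have sym: "qstar (x + y) = x + y" using sx by (simp add: qstar_add)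
  show ?thesis
  proof (cases "x = 0 \<or> y = 0")
    case True then show ?thesis using assms by auto
  next
    case False
    obtain D c where X: "QL x D c" "0 < c * sg s D" using assms(1) False unfolding Mc_def by auto
    obtain E e where Y: "QL y E e" "0 < e * sg s E" using assms(2) False unfolding Mc_def by auto
    consider "lexlt D E" | "D = E" | "lexlt E D" using lex_cases by blast
    then have "\<exists>D c. QL (x+y) D c \<and> 0 < c * sg s D"
    proof cases
      case 1 then show ?thesis using QL_add1[OF X(1) Y(1)] Y by blast
    next
      case 3 then show ?thesis using QL_add1[OF Y(1) X(1)] X by (metis add.commute)
    next
      case 2
      have "0 < (c + e) * sg s D" using X Y 2 by (simp add: distrib_right)
      then have "c + e \<noteq> 0" by auto
      then show ?thesis using QL_add2[OF X(1) Y(1)[unfolded 2[symmetric]]] \<open>0 < (c + e) * sg s D\<close> by blast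
    qed
    then show ?thesis using sym unfolding Mc_def by auto
  qed
qed

lemma Mc_conj:
  assumes "x \<in> Mc s" shows "a * x * qstar a \<in> Mc s"
proof -
  have sx: "qstar x = x" using assms unfolding Mc_def by auto
  have sym: "qstar (a * x * qstar a) = a * x * qstar a" using sx by (simp add: qstar_mult mult.assoc)
  show ?thesis
  proof (cases "a = 0 \<or> x = 0")
    case True then show ?thesis using sym unfolding Mc_def by auto
  next
    case False
    obtain D c where X: "QL x D c" "0 < c * sg s D" using assms False unfolding Mc_def by auto
    obtain \<delta> r where A: "QL a \<delta> r" using QL_exists False by blast
    have r: "r \<noteq> 0" using QL_c_nz[OF A] .
    have T: "qtyp D \<noteq> 3" using QL_sym_typ[OF X(1) sx] .
    define G where "G = gs (kx (qtyp \<delta>) (qtyp D)) (qtyp \<delta>) * gs (qtyp \<delta>) (qtyp D) *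
          (if qtyp \<delta> = 3 then -1 else (1::real))"
    have AX: "QL (a*x) (\<delta>+D) (gs (qtyp \<delta>) (qtyp D) * r * c)" using QL_mult[OF A X(1)] .
    have AS: "QL (qstar a) \<delta> (if qtyp \<delta> = 3 then -r else r)" using QL_star[OF A] .
    have AXA: "QL (a*x*qstar a) (\<delta>+D+\<delta>) (gs (qtyp (\<delta>+D)) (qtyp \<delta>) * (gs (qtyp \<delta>) (qtyp D) * r * c) *
        (if qtyp \<delta> = 3 then -r else r))" using QL_mult[OF AX AS] .
    have val: "gs (qtyp (\<delta>+D)) (qtyp \<delta>) * (gs (qtyp \<delta>) (qtyp D) * r * c) *
        (if qtyp \<delta> = 3 then -r else r) = G * (r * r) * c"
      unfolding G_def qtyp_add by simp
    have sl: "sg s (\<delta> + D + \<delta>) * G = sg s D" unfolding G_def using sign_lemma[OF T] .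
    have eq: "G * (r * r) * c * sg s (\<delta> + D + \<delta>) = (r * r) * (c * sg s D)"
    proof -
      have "G * (r * r) * c * sg s (\<delta> + D + \<delta>) = (sg s (\<delta> + D + \<delta>) * G) * (r * r) * c"
        by (simp only: mult_ac)
      also have "\<dots> = sg s D * (r * r) * c" by (simp only: sl)
      also have "\<dots> = (r * r) * (c * sg s D)" by (simp only: mult_ac)
      finally show ?thesis .
    qed
    moreover have "0 < r * r"
    proof (cases "r > 0")
      case True then show ?thesis by simp
    next
      case False then have "r < 0" using r by simp
      then show ?thesis by (simp add: mult_neg_neg)
    qed
    then have "0 < (r * r) * (c * sg s D)" using X(2) by simp
    ultimately have "0 < G * (r * r) * c * sg s (\<delta> + D + \<delta>)" by (simp only: eq)
    then have "\<exists>D c. QL (a * x * qstar a) D c \<and> 0 < c * sg s D" using AXA[unfolded val] by blast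
    then show ?thesis using sym unfolding Mc_def by simp
  qed
qed

lemma Mc_uhc: "uhc_D (Mc s)"
  unfolding unital_hermitian_cone_def
proof (intro conjI ballI)
  show "Mc s \<subseteq> {r \<in> UNIV. qstar r = r}" unfolding Mc_def by auto
  show "1 \<in> Mc s"
  proof -
    have "sg s (0,0) = 1" by (simp add: sg_def qtyp_def)
    then have "\<exists>D c. QL 1 D c \<and> 0 < c * sg s D" using QL_one by (metis mult_1 zero_less_one)
    then show ?thesis unfolding Mc_def by simp
  qed
  show "x + y \<in> Mc s" if "x \<in> Mc s" "y \<in> Mc s" for x y using Mc_add that .
  show "a * x * qstar a \<in> Mc s" if "x \<in> Mc s" for a x using Mc_conj that .
  show "Mc s \<inter> uminus ` Mc s = {0}"
  proof
    show "Mc s \<inter> uminus ` Mc s \<subseteq> {0}"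
    proof
      fix x assume "x \<in> Mc s \<inter> uminus ` Mc s"
      then obtain y where "x \<in> Mc s" "y \<in> Mc s" "x = - y" by auto
      then show "x \<in> {0}" using Mc_pointed[of x s] by auto
    qed
    have "0 \<in> Mc s" unfolding Mc_def by simp
    then show "{0} \<subseteq> Mc s \<inter> uminus ` Mc s" by (auto intro: image_eqI[of 0 _ 0])
  qed
qed

lemma qj_M1: "qj \<in> Mc 1"
proof -
  have "sg 1 (1,0) = 1" by (simp add: sg_def qtyp_def)
  then have "\<exists>D c. QL qj D c \<and> 0 < c * sg 1 D" using QL_qj by (metis mult_1 zero_less_one)
  moreover have "qstar qj = qj" by (simp add: qstar_def qj_def)
  ultimately show ?thesis unfolding Mc_def by simp
qed

lemma mqj_M2: "- qj \<in> Mc (-1)"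
proof -
  have "sg (-1) (1,0) = -1" by (simp add: sg_def qtyp_def)
  then have "0 < (-1) * sg (-1) (1,0)" by simp
  then have "\<exists>D c. QL (-qj) D c \<and> 0 < c * sg (-1) D" using QL_neg[OF QL_qj] by blast
  moreover have "qstar (-qj) = -qj" by (simp add: qstar_def qj_def uminus_quat_def)
  ultimately show ?thesis unfolding Mc_def by simp
qed

lemma Mc_K: "Mc 1 \<inter> Kset = Mc (-1) \<inter> Kset"
proof -
  have h: "sg 1 D = sg (-1) D" if "QL x D c" "x \<in> Kset" for x D c
  proof -
    have "cmp x 2 = 0" "cmp x 3 = 0" using that(2) by (auto simp: Kset_def cmp_def)
    then have "qtyp D \<noteq> 2" using QL_ld[OF that(1)] unfolding ld_def by metis
    then show ?thesis by (simp add: sg_def)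
  qed
  show ?thesis
  proof (rule set_eqI)
    fix x
    show "x \<in> Mc 1 \<inter> Kset \<longleftrightarrow> x \<in> Mc (-1) \<inter> Kset"
    proof (cases "x \<in> Kset")
      case True
      have "(\<exists>D c. QL x D c \<and> 0 < c * sg 1 D) \<longleftrightarrow> (\<exists>D c. QL x D c \<and> 0 < c * sg (-1) D)"
        using h[OF _ True] by metis
      then show ?thesis unfolding Mc_def using True by simp
    next
      case False then show ?thesis by simp
    qed
  qed
qed


lemma mat2_eq: "(X :: 'a^2^2) = Y \<longleftrightarrow> X$1$1 = Y$1$1 \<and> X$1$2 = Y$1$2 \<and> X$2$1 = Y$2$1 \<and> X$2$2 = Y$2$2"
  by (auto simp: vec_eq_iff forall_2)

lemma mm_entry: "((X :: 'a::semiring_1^2^2) ** Y)$i$j = X$i$1 * Y$1$j + X$i$2 * Y$2$j"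
  by (simp add: matrix_matrix_mult_def sum_2)

lemma ofF_mult: "ofF a * ofF b = ofF (a * b)" by (simp add: ofF_def times_quat_def)
lemma ofF_1: "ofF 1 = 1" by (simp add: ofF_def one_quat_def)
lemma ofF_0: "ofF 0 = 0" by (simp add: ofF_def zero_quat_def)
lemma ofF_neg: "ofF (-a) = - ofF a" by (simp add: ofF_def uminus_quat_def)
lemma qj_qj: "qj * qj = ofF vb" by (simp add: qj_def ofF_def times_quat_def)

definition Ainv :: "quat^2^2" where
  "Ainv = (\<chi> s t. if s = t then (if s = 1 then 1 else ofF (inverse vb)) else 0)"

lemma vb_inv: "vb * inverse vb = 1" "inverse vb * vb = 1" using vnz by auto

lemma A_Ainv: "Amat ** Ainv = mat 1" "Ainv ** Amat = mat 1"
  by (simp_all add: mat2_eq mm_entry Amat_def Ainv_def mat_def ofF_mult vb_inv ofF_1)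

lemma matrix_inv_A: "matrix_inv Amat = Ainv"
proof -
  have ex: "\<exists>A'. Amat ** A' = mat 1 \<and> A' ** Amat = mat 1" using A_Ainv by blast
  define B where "B = matrix_inv Amat"
  have B: "Amat ** B = mat 1 \<and> B ** Amat = mat 1"
    unfolding B_def matrix_inv_def using someI_ex[OF ex] .
  have "B = B ** (Amat ** Ainv)" using A_Ainv by simp
  also have "\<dots> = (B ** Amat) ** Ainv" by (simp add: matrix_mul_assoc)
  also have "\<dots> = Ainv" using B by simp
  finally show ?thesis unfolding B_def .
qed

definition X0 :: "quat^2^2" where
  "X0 = (\<chi> s t. if s = 1 \<and> t = 2 then ofF vb else if s = 2 \<and> t = 1 then 1 else 0)"

definition Pm :: "quat^2^2" where
  "Pm = (\<chi> s t. if s = t then (if s = 1 then 1 else -1) else 0)"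

lemma msharp_Pm: "msharp Pm = Pm"
  unfolding msharp_def matrix_inv_A
  by (simp add: mat2_eq mm_entry Amat_def Ainv_def Pm_def mstar_def qstar_def one_quat_def
      zero_quat_def uminus_quat_def times_quat_def plus_quat_def ofF_def vb_inv)

lemma Pm_M2K: "Pm \<in> M2K"
  unfolding M2K_def Pm_def Kset_def by (auto simp: one_quat_def zero_quat_def uminus_quat_def)

lemma Pm_X0: "Pm ** X0 ** msharp Pm = - X0"
  unfolding msharp_Pm
  by (simp add: mat2_eq mm_entry X0_def Pm_def)

lemma Pm_mX0: "Pm ** (- X0) ** msharp Pm = X0"
  unfolding msharp_Pm
  by (simp add: mat2_eq mm_entry X0_def Pm_def)

lemma X0_nz: "X0 \<noteq> 0"
proof
  assume "X0 = 0"
  then have "X0$2$1 = 0" by simp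
  then show False by (simp add: X0_def one_quat_def zero_quat_def)
qed

lemma no_cone:
  assumes L: "uhc_M2K L" shows "X0 \<notin> L \<and> - X0 \<notin> L"
proof -
  have conj: "\<And>x. x \<in> L \<Longrightarrow> Pm ** x ** msharp Pm \<in> L" using L Pm_M2K unfolding unital_hermitian_cone_def by blast
  have pt: "L \<inter> uminus ` L = {0}" using L unfolding unital_hermitian_cone_def by blast
  have "X0 \<notin> L"
  proof
    assume "X0 \<in> L"
    then have "- X0 \<in> L" using conj Pm_X0 by metis
    then have "X0 \<in> uminus ` L" by (metis image_eqI minus_minus)
    then have "X0 \<in> {0}" using pt \<open>X0 \<in> L\<close> by blast
    then show False using X0_nz by simp
  qed
  moreover have "- X0 \<notin> L"
  proof
    assume "- X0 \<in> L"
    then have "X0 \<in> L" using conj Pm_mX0 by metis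
    then show False using \<open>X0 \<notin> L\<close> by simp
  qed
  ultimately show ?thesis by simp
qed


lemma ebas_12: "ebas 1 = 1" "ebas 2 = qj" by (simp_all add: ebas_def)

lemma sum_ebas: "(\<Sum>s\<in>UNIV. ebas s * X$s$t) = X$1$t + qj * X$2$t"
  by (simp add: sum_2 ebas_12)

lemma K_inj:
  assumes "u \<in> Kset" "u' \<in> Kset" "w \<in> Kset" "w' \<in> Kset" "u + qj * w = u' + qj * w'"
  shows "u = u' \<and> w = w'"
proof -
  have "q0 (u + qj * w) = q0 (u' + qj * w')" "q1 (u + qj * w) = q1 (u' + qj * w')"
       "q2 (u + qj * w) = q2 (u' + qj * w')" "q3 (u + qj * w) = q3 (u' + qj * w')"
    using assms(5) by simp_all
  then show ?thesis using assms(1-4)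
    by (cases u; cases u'; cases w; cases w') (simp add: Kset_def plus_quat_def times_quat_def qj_def)
qed

lemma lreg_eq:
  assumes X: "X \<in> M2K" and e: "\<forall>t. d * ebas t = (\<Sum>s\<in>UNIV. ebas s * X$s$t)"
  shows "lreg d = X"
  unfolding lreg_def
proof (rule the_equality)
  show "X \<in> M2K \<and> (\<forall>t. d * ebas t = (\<Sum>s\<in>UNIV. ebas s * X$s$t))" using X e by blast
  fix Y assume Y: "Y \<in> M2K \<and> (\<forall>t. d * ebas t = (\<Sum>s\<in>UNIV. ebas s * Y$s$t))"
  have "Y$1$t = X$1$t \<and> Y$2$t = X$2$t" for t
  proof -
    have "d * ebas t = (\<Sum>s\<in>UNIV. ebas s * Y$s$t)" using Y by blast
    moreover have "d * ebas t = (\<Sum>s\<in>UNIV. ebas s * X$s$t)" using e by blast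
    ultimately have "Y$1$t + qj * Y$2$t = X$1$t + qj * X$2$t" by (simp only: sum_ebas)
    moreover have "Y$1$t \<in> Kset" "Y$2$t \<in> Kset" "X$1$t \<in> Kset" "X$2$t \<in> Kset"
      using X Y unfolding M2K_def by blast+
    ultimately show ?thesis using K_inj by blast
  qed
  then show "Y = X" by (simp add: mat2_eq)
qed

lemma X0_M2K: "X0 \<in> M2K"
  unfolding M2K_def X0_def Kset_def by (auto simp: ofF_def one_quat_def zero_quat_def)

lemma lreg_qj: "lreg qj = X0"
proof (rule lreg_eq[OF X0_M2K])
  show "\<forall>t. qj * ebas t = (\<Sum>s\<in>UNIV. ebas s * X0$s$t)"
    unfolding forall_2 sum_ebas by (simp add: X0_def ebas_12 qj_qj)
qed

lemma lreg_mqj: "lreg (- qj) = - X0"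
proof (rule lreg_eq)
  show "- X0 \<in> M2K" using X0_M2K unfolding M2K_def Kset_def by (auto simp: uminus_quat_def)
  show "\<forall>t. - qj * ebas t = (\<Sum>s\<in>UNIV. ebas s * (- X0)$s$t)"
    unfolding forall_2 sum_ebas by (simp add: X0_def ebas_12 qj_qj)
qed

theorem mainTheorem17:
  shows "\<exists>M1 M2. uhc_D M1 \<and> uhc_D M2 \<and> M1 \<noteq> M2 \<and> qj \<in> M1 \<and> - qj \<in> M2 \<and>
            M1 \<inter> Kset = M2 \<inter> Kset \<and>
            \<not> (\<exists>L. uhc_M2K L \<and> (lreg qj \<in> L \<or> - lreg qj \<in> L)) \<and>
            (\<forall>M \<in> {M1, M2}. \<not> (\<exists>L. uhc_M2K L \<and> M \<subseteq> lreg -` L))"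
proof (intro exI conjI)
  show "uhc_D (Mc 1)" "uhc_D (Mc (-1))" by (rule Mc_uhc)+
  show "qj \<in> Mc 1" by (rule qj_M1)
  show "- qj \<in> Mc (-1)" by (rule mqj_M2)
  show "Mc 1 \<inter> Kset = Mc (-1) \<inter> Kset" by (rule Mc_K)
  show "Mc 1 \<noteq> Mc (-1)"
  proof
    assume "Mc 1 = Mc (-1)"
    then have "qj \<in> Mc (-1)" "- qj \<in> Mc (-1)" using qj_M1 mqj_M2 by auto
    then have "qj = 0" by (rule Mc_pointed)
    then show False by (simp add: qj_def zero_quat_def)
  qed
  show nc: "\<not> (\<exists>L. uhc_M2K L \<and> (lreg qj \<in> L \<or> - lreg qj \<in> L))"
    using no_cone lreg_qj by auto
  show "\<forall>M \<in> {Mc 1, Mc (-1)}. \<not> (\<exists>L. uhc_M2K L \<and> M \<subseteq> lreg -` L)"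
  proof (intro ballI notI)
    fix M assume M: "M \<in> {Mc 1, Mc (-1)}" and "\<exists>L. uhc_M2K L \<and> M \<subseteq> lreg -` L"
    then obtain L where L: "uhc_M2K L" "M \<subseteq> lreg -` L" by blast
    show False
    proof (cases "M = Mc 1")
      case True
      then have "lreg qj \<in> L" using L qj_M1 by auto
      then show False using no_cone[OF L(1)] lreg_qj by simp
    next
      case False
      then have "M = Mc (-1)" using M by auto
      then have "lreg (-qj) \<in> L" using L mqj_M2 by auto
      then show False using no_cone[OF L(1)] lreg_mqj by simp
    qed
  qed
qed

end
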